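(* Let $\lambda$ and $g$ be as in the context. Let $b^{(1)}\in[0,c^{(1)}]$ be the point with $g(b^{(1)})=0$ and set $b^{(2)}=b^{(1)}/\lambda$. Then $g'(b^{(2)})=-1$.
   Context: There is a unique constant $\lambda=2.5029\ldots$ and a unique infinitely (period-doubling) renormalizable analytic unimodal map $g:[-1,1]\to[-1,1]$ solving $g(x)=-\lambda\, g^{2}(-x/\lambda)$ for $-1\le x\le1$ ($g^2=g\circ g$). Unimodal means: $-1$ is the unique fixed point with positive multiplier, $g(1)=-1$, and $g$ has a unique maximum at an interior nondegenerate critical point $c^{(0)}$. Moreover $g$ is analytic near $[-1,1]$, even, concave on $[-c^{(1)},c^{(1)}]$ where $c^{(1)}=g(c^{(0)})$, satisfies $g(c^{(1)})=-c^{(1)}/\lambda$, $g'(c^{(1)})=-\lambda$, and has negative Schwarzian derivative. *)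

theory Defs
  imports "HOL-Analysis.Analysis"
begin

definition real_analytic_near :: "(real \<Rightarrow> real) \<Rightarrow> real set \<Rightarrow> bool" where
  "real_analytic_near g S \<longleftrightarrow>
     (\<exists>U. open U \<and> S \<subseteq> U \<and>
        (\<forall>x\<in>U. \<exists>r>0. \<exists>a::nat \<Rightarrow> real.
            \<forall>y. \<bar>y - x\<bar> < r \<longrightarrow> (\<lambda>n. a n * (y - x) ^ n) sums g y))"

definition schwarzian :: "(real \<Rightarrow> real) \<Rightarrow> real \<Rightarrow> real" where
  "schwarzian g x =
     (deriv (deriv (deriv g)) x) / deriv g x
     - 3 / 2 * ((deriv (deriv g) x) / deriv g x) ^ 2"

end

theory Submission
  imports Defs
begin

lemma analytic_deriv:
  assumes "real_analytic_near g S" "x \<in> S"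
  shows "\<exists>D. (g has_real_derivative D) (at x)"
proof -
  obtain U where U: "open U" "S \<subseteq> U" and H: "\<forall>x\<in>U. \<exists>r>0. \<exists>a::nat \<Rightarrow> real.
            \<forall>y. \<bar>y - x\<bar> < r \<longrightarrow> (\<lambda>n. a n * (y - x) ^ n) sums g y"
    using assms(1) unfolding real_analytic_near_def by blast
  obtain r a where r: "r > 0" and ra: "\<forall>y. \<bar>y - x\<bar> < r \<longrightarrow> (\<lambda>n. a n * (y - x) ^ n) sums g y"
    using H U assms(2) by blast
  have "summable (\<lambda>n. a n * (r/2) ^ n)"
    using ra[rule_format, of "x + r/2"] r by (auto simp: sums_iff)
  then have d0: "DERIV (\<lambda>h. \<Sum>n. a n * h^n) 0 :> (\<Sum>n. diffs a n * 0^n)"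
    by (rule termdiffs_strong) (use r in auto)
  have d1: "((\<lambda>y. \<Sum>n. a n * (y - x)^n) has_real_derivative (\<Sum>n. diffs a n * 0^n)) (at x)"
  proof -
    have dd: "((\<lambda>y. y - x) has_real_derivative 1) (at x)"
      by (auto intro!: derivative_eq_intros)
    have d0': "DERIV (\<lambda>h. \<Sum>n. a n * h^n) ((\<lambda>y. y - x) x) :> (\<Sum>n. diffs a n * 0^n)"
      using d0 by simp
    show ?thesis using DERIV_chain2[OF d0' dd] by simp
  qed
  have "(g has_real_derivative (\<Sum>n. diffs a n * 0^n)) (at x)"
    apply (rule has_field_derivative_transform_within_open[OF d1, of "ball x r"])
    using r ra by (auto simp: dist_real_def sums_iff abs_minus_commute)
  then show ?thesis by blast
qed

theorem mainTheorem5: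
  fixes g :: "real \<Rightarrow> real" and lam c0 b1 :: real
  assumes lam_bounds: "2.5029 \<le> lam" "lam < 2.503"
    and analytic: "real_analytic_near g {-1..1}"
    and maps_into: "\<forall>x\<in>{-1..1}. g x \<in> {-1..1}"
    and feigenbaum_eq: "\<forall>x\<in>{-1..1}. g x = - lam * g (g (- x / lam))"
    and fix_m1: "g (-1) = -1" "deriv g (-1) > 0"
    and fix_unique: "\<forall>x\<in>{-1..1}. g x = x \<and> deriv g x > 0 \<longrightarrow> x = -1"
    and g_1: "g 1 = -1"
    and c0_interior: "c0 \<in> {-1<..<1}"
    and c0_max: "\<forall>x\<in>{-1..1}. x \<noteq> c0 \<longrightarrow> g x < g c0"
    and c0_nondeg: "deriv g c0 = 0" "deriv (deriv g) c0 \<noteq> 0"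
    and even: "\<forall>x\<in>{-1..1}. g (- x) = g x"
    and concave: "concave_on {- g c0 .. g c0} g"
    and c1_image: "g (g c0) = - g c0 / lam"
    and c1_deriv: "deriv g (g c0) = - lam"
    and neg_schwarzian: "\<forall>x\<in>{-1..1}. deriv g x \<noteq> 0 \<longrightarrow> schwarzian g x < 0"
    and b1_mem: "b1 \<in> {0 .. g c0}"
    and b1_zero: "g b1 = 0"
  shows "deriv g (b1 / lam) = -1"
proof -
  have hasD: "(g has_real_derivative deriv g x) (at x)" if "x \<in> {-1..1}" for x
    using analytic_deriv[OF analytic that] DERIV_deriv_iff_real_differentiable real_differentiable_def by blast
  have c00: "c0 = 0"
  proof (rule ccontr)
    assume "c0 \<noteq> 0"
    then have "g (- c0) < g c0" using c0_max c0_interior by auto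
    moreover have "g (- c0) = g c0" using even c0_interior by auto
    ultimately show False by simp
  qed
  define c1 where "c1 = g 0"
  have lampos: "lam > 1" using lam_bounds by simp
  have c1ge: "0 \<le> c1" using b1_mem c00 c1_def by simp
  have c1ne: "c1 \<noteq> 0"
  proof
    assume "c1 = 0"
    then have "deriv g 0 = - lam" using c1_deriv c00 c1_def by simp
    then show False using c0_nondeg c00 lampos by simp
  qed
  have c1le: "c1 \<le> 1" using maps_into c1_def by auto
  have c1ne1: "c1 \<noteq> 1"
  proof
    assume "c1 = 1"
    then have "-1 = - 1 / lam" using c1_image c00 c1_def g_1 by simp
    then show False using lampos by (simp add: field_simps)
  qed
  have c1pos: "0 < c1" "c1 < 1" using c1ge c1ne c1le c1ne1 by auto
  have b1ne0: "b1 \<noteq> 0" using b1_zero c1_def c1ne by auto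
  have b1nec1: "b1 \<noteq> c1"
  proof
    assume "b1 = c1"
    then have "- c1 / lam = 0" using c1_image c00 c1_def b1_zero by simp
    then show False using c1ne lampos by simp
  qed
  have b1r: "0 < b1" "b1 < c1" using b1_mem b1ne0 b1nec1 c00 c1_def by auto
  have conv: "convex_on {-c1..c1} (\<lambda>x. - g x)"
    using concave c00 c1_def by (simp add: concave_on_def)
  have decr: "g y < g x" if xy: "0 \<le> x" "x < y" "y \<le> c1" for x y
  proof -
    define t where "t = x / y"
    have ypos: "y > 0" using xy by simp
    have t: "0 \<le> t" "t < 1" using xy ypos by (auto simp: t_def field_simps)
    have xe: "x = (1 - t) * 0 + t * y" using ypos by (simp add: t_def)
    have "- g ((1 - t) * 0 + t * y) \<le> (1 - t) * (- g 0) + t * (- g y)"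
      using convex_onD[OF conv, of t 0 y] t xy c1pos by auto
    then have "g x \<ge> (1 - t) * g 0 + t * g y" using xe by (simp add: algebra_simps)
    moreover have "g y < g 0" using c0_max c00 xy c1pos by auto
    moreover have "(1 - t) * g y < (1 - t) * g 0" using t calculation(2) by simp
    ultimately show ?thesis by (simp add: algebra_simps)
  qed
  define b2 where "b2 = b1 / lam"
  have b2r: "0 < b2" "b2 < b1" using b1r lampos by (auto simp: b2_def field_simps)
  have eq: "g x = - lam * g (g (x / lam))" if "x \<in> {-1..1}" for x
  proof -
    have "\<bar>x\<bar> \<le> 1" using that by auto
    then have "\<bar>x\<bar> \<le> lam" using lampos by linarith
    then have "\<bar>x / lam\<bar> \<le> 1" using lampos by (simp add: abs_divide)
    then have "x / lam \<in> {-1..1}" using abs_le_D1 abs_le_D2 by fastforce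
    then have "g (- (x/lam)) = g (x / lam)" using even by blast
    then show ?thesis using feigenbaum_eq that by auto
  qed
  have "g (g b2) = 0"
    using eq[of b1] b1r c1pos b1_zero lampos by (simp add: b2_def)
  have gb2: "g b1 < g b2" using decr[of b2 b1] b2r b1r by simp
  have gb2le: "g b2 \<le> c1" using c0_max c00 c1_def b2r b1r c1pos
  proof -
    have "b2 \<in> {-1..1}" using b2r b1r c1pos by auto
    then show ?thesis using c0_max c00 c1_def by (cases "b2 = 0") auto
  qed
  have gb2eq: "g b2 = b1"
  proof (rule ccontr)
    assume ne: "g b2 \<noteq> b1"
    have "g (g b2) \<noteq> g b1"
    proof (cases "g b2 < b1")
      case True then show ?thesis using decr[of "g b2" b1] gb2 b1_zero b1r by simp
    next
      case False then show ?thesis using decr[of b1 "g b2"] ne gb2le b1r by simp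
    qed
    then show False using \<open>g (g b2) = 0\<close> b1_zero by simp
  qed
  have dom: "b1 \<in> {-1..1}" "b2 \<in> {-1..1}" using b1r b2r c1pos by auto
  have d2: "((\<lambda>x. x / lam) has_real_derivative 1 / lam) (at b1)"
    using lampos by (auto intro!: derivative_eq_intros)
  have db2: "(g has_real_derivative deriv g b2) (at ((\<lambda>x. x / lam) b1))"
    using hasD[OF dom(2)] by (simp add: b2_def)
  have c2: "((\<lambda>x. g (x / lam)) has_real_derivative deriv g b2 * (1 / lam)) (at b1)"
    using DERIV_chain2[OF db2 d2] by simp
  have db1: "(g has_real_derivative deriv g b1) (at ((\<lambda>x. g (x / lam)) b1))"
    using hasD[OF dom(1)] gb2eq by (simp add: b2_def)
  have c3: "((\<lambda>x. g (g (x / lam))) has_real_derivative deriv g b1 * (deriv g b2 * (1 / lam))) (at b1)"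
    using DERIV_chain2[OF db1 c2] by simp
  have c4: "((\<lambda>x. - lam * g (g (x / lam))) has_real_derivative - lam * (deriv g b1 * (deriv g b2 * (1 / lam)))) (at b1)"
    using DERIV_cmult[OF c3, of "- lam"] by simp
  have c5: "(g has_real_derivative - lam * (deriv g b1 * (deriv g b2 * (1 / lam)))) (at b1)"
    apply (rule has_field_derivative_transform_within_open[OF c4, of "{-1<..<1}"])
    using b1r c1pos eq by auto
  have key: "deriv g b1 = - lam * (deriv g b1 * (deriv g b2 * (1 / lam)))"
    using DERIV_unique[OF hasD[OF dom(1)] c5] .
  have key2: "deriv g b1 = - (deriv g b1 * deriv g b2)"
    using key lampos by (simp add: field_simps)
  have nz: "deriv g b1 \<noteq> 0"
  proof
    assume z: "deriv g b1 = 0"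
    have dd: "((\<lambda>x. - g x) has_real_derivative - deriv g b1) (at b1 within {-c1..c1})"
      using DERIV_minus[OF hasD[OF dom(1)]] by (rule has_field_derivative_at_within)
    have cc: "connected {-c1..c1}" by simp
    have ii: "b1 \<in> interior {-c1..c1}" using b1r c1pos by (simp add: interior_atLeastAtMost_real)
    have mm: "(0::real) \<in> {-c1..c1}" using c1pos by simp
    have "(- g 0) - (- g b1) \<ge> (- deriv g b1) * (0 - b1)"
      using convex_on_imp_above_tangent[OF conv cc ii mm dd] by simp
    then have "- g 0 \<ge> 0" using z b1_zero by simp
    then show False using c1_def c1pos by simp
  qed
  have "deriv g b1 * (deriv g b2 + 1) = 0" using key2 by (simp add: algebra_simps)
  then have "deriv g b2 + 1 = 0" using nz by simp
  then show ?thesis by (simp add: b2_def)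
qed

end
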